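(* Let $I$ be a monomial ideal of $R=K[x_1,\ldots,x_d]$ ($K$ a field) and let $r\in\mathbb{R}$, $r\ge0$. Let $\mathcal{S}(I,r)$ denote the set of lattice points in $\operatorname{hype}(I,r)$. Then (1) $\lceil r\cdot\operatorname{np}(I)\rceil:=\{(\lceil p_1\rceil,\ldots,\lceil p_d\rceil)\mid \mathbf{p}\in r\cdot\operatorname{np}(I)\}\subseteq\mathcal{S}(I,r)$; (2) $\overline{I^r}=(\{\mathbf{x}^{\mathbf{a}}\mid \mathbf{a}\in r\cdot NP(I)\cap\operatorname{hype}(I,r)\cap\mathbb{N}^d\})$.
   Context: $\mathbb{N}$ denotes the non-negative integers and $\mathbf{x}^{\mathbf{a}}=x_1^{a_1}\cdots x_d^{a_d}$. $G(I)$ is the minimal monomial generating set of $I$. $NP(I)$ is the convex hull in $\mathbb{R}^d$ of $\{\mathbf{a}\in\mathbb{N}^d\mid \mathbf{x}^{\mathbf{a}}\in I\}$ and $\operatorname{np}(I)$ is the convex hull of $\{\mathbf{a}\mid \mathbf{x}^{\mathbf{a}}\in G(I)\}$. For real $r\ge0$, $\overline{I^r}=(\{\mathbf{x}^{\mathbf{a}}\mid \mathbf{a}\in r\cdot NP(I)\cap\mathbb{N}^d\})$. Let $\mathcal{V}(I,r)=\{(\lceil ra_1\rceil,\ldots,\lceil ra_d\rceil)\mid \mathbf{x}^{\mathbf{a}}\in G(I)\}$, and for $1\le i\le d$ let $\min(\mathcal{V},i)=\min_{\alpha\in\mathcal{V}(I,r)}\alpha_i$ and $\max(\mathcal{V},i)=\max_{\alpha\in\mathcal{V}(I,r)}\alpha_i$.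 The hyperrectangle is $\operatorname{hype}(I,r)=\prod_{i=1}^d[\min(\mathcal{V},i),\max(\mathcal{V},i)]\subseteq\mathbb{R}^d$. *)

theory Defs
  imports "HOL-Analysis.Analysis"
begin

text \<open>Monomials in K[x_1,...,x_d] are identified with exponent vectors
  a :: 'n \<Rightarrow> nat, where the finite type 'n indexes the d variables.
  x^a divides x^b iff a \<le> b (pointwise order).  A monomial ideal I is determined
  by (and determines) the set E of exponents of the monomials it contains; such sets
  are exactly the upward closed subsets of \<nat>^d.\<close>

definition monomial_ideal :: "('n::finite \<Rightarrow> nat) set \<Rightarrow> bool" where
  "monomial_ideal E \<longleftrightarrow> (\<forall>a\<in>E. \<forall>b. a \<le> b \<longrightarrow> b \<in> E)"

definition ideal_gen :: "('n::finite \<Rightarrow> nat) set \<Rightarrow> ('n \<Rightarrow> nat) set" where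
  "ideal_gen S = {b. \<exists>a\<in>S. a \<le> b}"

definition gens :: "('n::finite \<Rightarrow> nat) set \<Rightarrow> ('n \<Rightarrow> nat) set" where
  "gens E = {a\<in>E. \<forall>b\<in>E. b \<le> a \<longrightarrow> b = a}"

definition rv :: "('n::finite \<Rightarrow> nat) \<Rightarrow> real^'n" where
  "rv a = (\<chi> i. real (a i))"

definition NP :: "('n::finite \<Rightarrow> nat) set \<Rightarrow> (real^'n) set" where
  "NP E = convex hull (rv ` E)"

definition np :: "('n::finite \<Rightarrow> nat) set \<Rightarrow> (real^'n) set" where
  "np E = convex hull (rv ` gens E)"

definition int_closure_pow :: "('n::finite \<Rightarrow> nat) set \<Rightarrow> real \<Rightarrow> ('n \<Rightarrow> nat) set" where
  "int_closure_pow E r = ideal_gen {a. rv a \<in> (\<lambda>x. r *\<^sub>R x) ` NP E}"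

definition VV :: "('n::finite \<Rightarrow> nat) set \<Rightarrow> real \<Rightarrow> ('n \<Rightarrow> int) set" where
  "VV E r = {(\<lambda>i. \<lceil>r * real (a i)\<rceil>) | a. a \<in> gens E}"

definition hype :: "('n::finite \<Rightarrow> nat) set \<Rightarrow> real \<Rightarrow> (real^'n) set" where
  "hype E r = {p. \<forall>i. real_of_int (Min ((\<lambda>\<alpha>. \<alpha> i) ` VV E r)) \<le> p $ i
                     \<and> p $ i \<le> real_of_int (Max ((\<lambda>\<alpha>. \<alpha> i) ` VV E r))}"

definition SS :: "('n::finite \<Rightarrow> nat) set \<Rightarrow> real \<Rightarrow> (real^'n) set" where
  "SS E r = {p \<in> hype E r. \<forall>i. p $ i \<in> \<int>}"

definition ceil_set :: "(real^'n::finite) set \<Rightarrow> (real^'n) set" where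
  "ceil_set P = {(\<chi> i. real_of_int \<lceil>p $ i\<rceil>) | p. p \<in> P}"

end

theory Submission
  imports Defs "HOL-Library.Ramsey"
begin


lemma antichain_finite:
  fixes A :: "('n::finite \<Rightarrow> nat) set"
  assumes anti: "\<And>a b. a \<in> A \<Longrightarrow> b \<in> A \<Longrightarrow> a \<le> b \<Longrightarrow> a = b"
  shows "finite A"
proof (rule ccontr)
  assume "infinite A"
  then obtain f :: "nat \<Rightarrow> ('n \<Rightarrow> nat)" where finj: "inj f" and frange: "range f \<subseteq> A"
    using infinite_countable_subset by blast
  obtain h where h: "bij_betw h (UNIV :: 'n set set) {0..<card (UNIV :: 'n set set)}"
    using ex_bij_betw_finite_nat[of "UNIV :: 'n set set"] by auto
  define D where "D = (\<lambda>X::nat set. {k. f (Max X) k < f (Min X) k})"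
  define col where "col = (\<lambda>X. h (D X))"
  have part: "\<forall>x\<in>(UNIV::nat set). \<forall>y\<in>UNIV. x \<noteq> y \<longrightarrow> col {x, y} < card (UNIV :: 'n set set)"
    using h unfolding col_def bij_betw_def by auto
  obtain Y t where Y: "infinite Y" and hom: "\<forall>x\<in>Y. \<forall>y\<in>Y. x\<noteq>y \<longrightarrow> col {x, y} = t"
    using Ramsey2[OF _ part] by auto
  obtain x0 where x0: "x0 \<in> Y" using Y by (metis finite.emptyI ex_in_conv)
  obtain y0 where y0: "y0 \<in> Y" "x0 < y0"
    using Y by (meson infinite_nat_iff_unbounded)
  have hinj: "inj h" using h by (simp add: bij_betw_def)
  have Dpair: "D {x, y} = D {x0, y0}" if "x \<in> Y" "y \<in> Y" "x \<noteq> y" for x y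
    using hom that x0 y0 hinj unfolding col_def by (metis inj_def less_irrefl)
  have Dxy: "D {x, y} = {k. f y k < f x k}" if "x < y" for x y
    using that unfolding D_def by (simp add: max_def min_def)
  show False
  proof (cases "D {x0, y0} = {}")
    case True
    then have "f x0 \<le> f y0" using Dxy[OF y0(2)] by (auto simp: le_fun_def not_less)
    then have "f x0 = f y0" using anti frange by blast
    then show False using finj y0(2) by (metis inj_def less_irrefl)
  next
    case False
    then obtain k where k: "k \<in> D {x0, y0}" by auto
    have dec: "f y k < f x k" if "x \<in> Y" "y \<in> Y" "x < y" for x y
      using Dpair[of x y] Dxy[OF that(3)] k that by auto
    define m where "m = (LEAST y. y \<in> Y)"
    have m: "m \<in> Y" "\<And>y. y \<in> Y \<Longrightarrow> m \<le> y"
      using x0 unfolding m_def by (auto intro: LeastI Least_le)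
    have "inj_on (\<lambda>y. f y k) Y"
    proof (rule inj_onI)
      fix x y assume "x \<in> Y" "y \<in> Y" "f x k = f y k"
      then show "x = y" using dec[of x y] dec[of y x] by (metis less_irrefl linorder_neqE_nat)
    qed
    moreover have "(\<lambda>y. f y k) ` Y \<subseteq> {..f m k}"
      using dec m by (force simp: le_less)
    ultimately have "finite Y" by (meson finite_atMost finite_imageD finite_subset)
    then show False using Y by simp
  qed
qed


lemma gens_finite: "finite (gens E)"
  by (rule antichain_finite) (auto simp: gens_def)

lemma gens_below:
  assumes "e \<in> E" shows "\<exists>g\<in>gens E. g \<le> e"
proof -
  obtain a where a: "a \<in> E \<and> a \<le> e" and amin: "\<And>b. b \<in> E \<and> b \<le> e \<Longrightarrow> sum a UNIV \<le> sum b UNIV"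
    using ex_has_least_nat[of "\<lambda>a. a \<in> E \<and> a \<le> e" e "\<lambda>a. sum a UNIV"] assms by auto
  have "a \<in> gens E"
    unfolding gens_def
  proof (intro CollectI conjI ballI impI)
    show "a \<in> E" using a by simp
    fix b assume b: "b \<in> E" "b \<le> a"
    then have "b \<le> e" using a order.trans by blast
    then have "sum a UNIV \<le> sum b UNIV" using amin b by blast
    moreover have "sum b UNIV \<le> sum a UNIV" using b by (simp add: le_fun_def sum_mono)
    ultimately have eq: "sum b UNIV = sum a UNIV" by simp
    show "b = a"
    proof
      fix i show "b i = a i"
        using sum_mono_inv[OF eq] b by (simp add: le_fun_def)
    qed
  qed
  then show ?thesis using a by blast
qed

lemma rv_nth [simp]: "rv a $ i = real (a i)"
  by (simp add: rv_def)

lemma convex_comp_ge: "convex {y::real^'n. c \<le> y $ i}"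
  unfolding convex_def
proof (intro allI impI ballI, simp)
  fix x y :: "real^'n" and u v :: real
  assume h: "c \<le> x $ i" "c \<le> y $ i" "0 \<le> u" "0 \<le> v" "u + v = 1"
  have "u * c \<le> u * x $ i" "v * c \<le> v * y $ i" using h by (simp_all add: mult_left_mono)
  then have "(u + v) * c \<le> u * x $ i + v * y $ i" by (simp add: distrib_right)
  then show "c \<le> u * x $ i + v * y $ i" using h by simp
qed

lemma convex_comp_le: "convex {y::real^'n. y $ i \<le> c}"
  unfolding convex_def
proof (intro allI impI ballI, simp)
  fix x y :: "real^'n" and u v :: real
  assume h: "x $ i \<le> c" "y $ i \<le> c" "0 \<le> u" "0 \<le> v" "u + v = 1"
  have "u * x $ i \<le> u * c" "v * y $ i \<le> v * c" using h by (simp_all add: mult_left_mono)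
  then have "u * x $ i + v * y $ i \<le> (u + v) * c" by (simp add: distrib_right)
  then show "u * x $ i + v * y $ i \<le> c" using h by simp
qed

lemma hull_lb:
  assumes "\<And>e. e \<in> S \<Longrightarrow> c \<le> real (e i)" "x \<in> convex hull (rv ` S)"
  shows "c \<le> x $ i"
proof -
  have "convex hull (rv ` S) \<subseteq> {y. c \<le> y $ i}"
    by (rule hull_minimal) (use assms convex_comp_ge in auto)
  then show ?thesis using assms by auto
qed

lemma hull_ub:
  assumes "\<And>e. e \<in> S \<Longrightarrow> real (e i) \<le> c" "x \<in> convex hull (rv ` S)"
  shows "x $ i \<le> c"
proof -
  have "convex hull (rv ` S) \<subseteq> {y. y $ i \<le> c}"
    by (rule hull_minimal) (use assms convex_comp_le in auto)
  then show ?thesis using assms by auto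
qed

lemma up_axis:
  fixes E :: "('n::finite \<Rightarrow> nat) set"
  assumes mi: "monomial_ideal E" and y: "y \<in> convex hull (rv ` E)" and t: "t \<ge> 0"
  shows "y + t *\<^sub>R axis k 1 \<in> convex hull (rv ` E)"
proof (cases "t = 0")
  case True then show ?thesis using y by simp
next
  case False
  define N where "N = nat \<lceil>t\<rceil>"
  have tN: "t \<le> real N" "real N > 0" using False t unfolding N_def by linarith+
  define v :: "real^'n" where "v = real N *\<^sub>R axis k 1"
  have sub: "(\<lambda>x. v + x) ` rv ` E \<subseteq> rv ` E"
  proof
    fix z assume "z \<in> (\<lambda>x. v + x) ` rv ` E"
    then obtain e where e: "e \<in> E" "z = v + rv e" by auto
    define e' where "e' = (\<lambda>j. e j + (if j = k then N else 0))"
    have "e \<le> e'" by (simp add: e'_def le_fun_def)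
    then have "e' \<in> E" using mi e unfolding monomial_ideal_def by blast
    moreover have "z = rv e'" using e by (simp add: vec_eq_iff e'_def v_def axis_def)
    ultimately show "z \<in> rv ` E" by blast
  qed
  have "v + y \<in> (\<lambda>x. v + x) ` (convex hull (rv ` E))" using y by blast
  also have "\<dots> = convex hull ((\<lambda>x. v + x) ` rv ` E)" by (rule convex_hull_translation[symmetric])
  also have "\<dots> \<subseteq> convex hull (rv ` E)" by (rule hull_mono[OF sub])
  finally have vy: "v + y \<in> convex hull (rv ` E)" .
  have "(1 - t / N) *\<^sub>R y + (t / N) *\<^sub>R (v + y) \<in> convex hull (rv ` E)"
    by (rule convexD[OF convex_convex_hull y vy]) (use tN t in auto)
  moreover have "(1 - t / N) *\<^sub>R y + (t / N) *\<^sub>R (v + y) = y + t *\<^sub>R axis k 1"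
    using tN by (simp add: v_def algebra_simps)
  ultimately show ?thesis by simp
qed

lemma up_closed:
  fixes E :: "('n::finite \<Rightarrow> nat) set"
  assumes mi: "monomial_ideal E" and y: "y \<in> convex hull (rv ` E)" and w: "\<And>i. w $ i \<ge> 0"
  shows "y + w \<in> convex hull (rv ` E)"
proof -
  define d where "d = real CARD('n)"
  have d: "d > 0" unfolding d_def by simp
  have "(\<Sum>k\<in>UNIV. (1/d) *\<^sub>R (y + (d * w $ k) *\<^sub>R axis k 1)) \<in> convex hull (rv ` E)"
    by (rule convex_sum) (use d up_axis[OF mi y] w in \<open>auto simp: d_def\<close>)
  moreover have "(\<Sum>k\<in>UNIV. (1/d) *\<^sub>R (y + (d * w $ k) *\<^sub>R axis k 1)) = y + w"
  proof -
    have "(\<Sum>x::'n\<in>UNIV. (y $ i + d * w $ x * (if i = x then 1 else 0)) / d) = y $ i + w $ i" for i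
    proof -
      have "(\<Sum>x::'n\<in>UNIV. (y $ i + d * w $ x * (if i = x then 1 else 0)) / d)
          = (\<Sum>x::'n\<in>UNIV. y $ i / d + (if x = i then w $ x else 0))"
        using d by (intro sum.cong) (auto simp: add_divide_distrib)
      also have "\<dots> = (\<Sum>x::'n\<in>UNIV. y $ i / d) + (\<Sum>x::'n\<in>UNIV. (if x = i then w $ x else 0))"
        by (rule sum.distrib)
      also have "\<dots> = y $ i + w $ i" using d by (simp add: d_def)
      finally show ?thesis .
    qed
    then show ?thesis by (simp add: vec_eq_iff sum_component axis_def d_def)
  qed
  ultimately show ?thesis by simp
qed


lemma down_trunc:
  fixes E E' :: "('n::finite \<Rightarrow> nat) set"
  assumes below: "\<And>e. e \<in> E \<Longrightarrow> \<exists>e'\<in>E'. e' \<le> e"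
    and x: "x \<in> convex hull (rv ` E)"
  shows "\<exists>x'\<in>convex hull (rv ` E'). \<forall>i. x' $ i \<le> x $ i"
proof -
  define U where "U = {y::real^'n. \<exists>z\<in>convex hull (rv ` E'). \<forall>i. z $ i \<le> y $ i}"
  have "convex U"
    unfolding convex_def
  proof (intro ballI allI impI)
    fix y1 y2 :: "real^'n" and u v :: real
    assume h: "y1 \<in> U" "y2 \<in> U" "0 \<le> u" "0 \<le> v" "u + v = 1"
    obtain z1 where z1: "z1 \<in> convex hull (rv ` E')" "\<forall>i. z1 $ i \<le> y1 $ i" using h U_def by auto
    obtain z2 where z2: "z2 \<in> convex hull (rv ` E')" "\<forall>i. z2 $ i \<le> y2 $ i" using h U_def by auto
    have "u *\<^sub>R z1 + v *\<^sub>R z2 \<in> convex hull (rv ` E')"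
      by (rule convexD[OF convex_convex_hull z1(1) z2(1)]) (use h in auto)
    moreover have "\<forall>i. (u *\<^sub>R z1 + v *\<^sub>R z2) $ i \<le> (u *\<^sub>R y1 + v *\<^sub>R y2) $ i"
      using z1 z2 h by (auto intro!: add_mono mult_left_mono)
    ultimately show "u *\<^sub>R y1 + v *\<^sub>R y2 \<in> U" unfolding U_def by blast
  qed
  moreover have "rv ` E \<subseteq> U"
  proof
    fix y assume "y \<in> rv ` E"
    then obtain e where e: "e \<in> E" "y = rv e" by auto
    obtain e' where "e' \<in> E'" "e' \<le> e" using below e by blast
    then show "y \<in> U" unfolding U_def using e
      by (intro CollectI bexI[of _ "rv e'"]) (auto intro: hull_inc simp: le_fun_def)
  qed
  ultimately have "convex hull (rv ` E) \<subseteq> U" by (rule hull_minimal[rotated])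
  then show ?thesis using x unfolding U_def by auto
qed



lemma ex_min_coord:
  fixes G :: "('n \<Rightarrow> nat) set"
  assumes "finite G" "G \<noteq> {}" shows "\<exists>g0\<in>G. \<forall>g\<in>G. g0 i \<le> g i"
proof -
  have "Min ((\<lambda>g. g i) ` G) \<in> (\<lambda>g. g i) ` G" using assms by (intro Min_in) auto
  then obtain g0 where "g0 \<in> G" "g0 i = Min ((\<lambda>g. g i) ` G)" by auto
  then show ?thesis using assms by (metis Min_le finite_imageI image_eqI)
qed

lemma ex_max_coord:
  fixes G :: "('n \<Rightarrow> nat) set"
  assumes "finite G" "G \<noteq> {}" shows "\<exists>g1\<in>G. \<forall>g\<in>G. g i \<le> g1 i"
proof -
  have "Max ((\<lambda>g. g i) ` G) \<in> (\<lambda>g. g i) ` G" using assms by (intro Max_in) auto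
  then obtain g1 where "g1 \<in> G" "g1 i = Max ((\<lambda>g. g i) ` G)" by auto
  then show ?thesis using assms by (metis Max_ge finite_imageI image_eqI)
qed

lemma Vi_eq: "(\<lambda>\<alpha>. \<alpha> i) ` VV E r = (\<lambda>a. \<lceil>r * real (a i)\<rceil>) ` gens E"
  unfolding VV_def by auto

theorem lemma4p4:
  fixes E :: "('n::finite \<Rightarrow> nat) set" and r :: real
  assumes "monomial_ideal E" and "r \<ge> 0"
  shows "ceil_set ((\<lambda>x. r *\<^sub>R x) ` np E) \<subseteq> SS E r \<and>
         int_closure_pow E r =
           ideal_gen {a. rv a \<in> (\<lambda>x. r *\<^sub>R x) ` NP E \<inter> hype E r}"
proof -
  note mi = assms(1) and r = assms(2)
  define G where "G = gens E"
  have finG: "finite G" unfolding G_def by (rule gens_finite)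
  have finV: "finite ((\<lambda>\<alpha>. \<alpha> i) ` VV E r)" for i
    unfolding Vi_eq G_def[symmetric] using finG by simp
  have memV: "\<lceil>r * real (g i)\<rceil> \<in> (\<lambda>\<alpha>. \<alpha> i) ` VV E r" if "g \<in> G" for g i
    unfolding Vi_eq G_def[symmetric] using that by simp
  have GE: "G \<subseteq> E" unfolding G_def gens_def by auto
  have below: "\<exists>g\<in>G. g \<le> e" if "e \<in> E" for e
    unfolding G_def using gens_below[OF that] .
  have part1: "ceil_set ((\<lambda>x. r *\<^sub>R x) ` np E) \<subseteq> SS E r"
  proof
    fix p assume "p \<in> ceil_set ((\<lambda>x. r *\<^sub>R x) ` np E)"
    then obtain x where x: "x \<in> convex hull (rv ` G)" and p: "p = (\<chi> i. real_of_int \<lceil>(r *\<^sub>R x) $ i\<rceil>)"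
      unfolding ceil_set_def np_def G_def by auto
    have Gne: "G \<noteq> {}" using x by auto
    have "p \<in> hype E r" unfolding hype_def
    proof (intro CollectI allI conjI)
      fix i
      obtain g0 where g0: "g0 \<in> G" "\<forall>g\<in>G. g0 i \<le> g i" using ex_min_coord[OF finG Gne] by blast
      obtain g1 where g1: "g1 \<in> G" "\<forall>g\<in>G. g i \<le> g1 i" using ex_max_coord[OF finG Gne] by blast
      have "real (g0 i) \<le> x $ i" by (rule hull_lb[OF _ x]) (use g0 in auto)
      then have "\<lceil>r * real (g0 i)\<rceil> \<le> \<lceil>r * x $ i\<rceil>" using r by (intro ceiling_mono mult_left_mono)
      moreover have "Min ((\<lambda>\<alpha>. \<alpha> i) ` VV E r) \<le> \<lceil>r * real (g0 i)\<rceil>"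
        using finV memV[OF g0(1)] by (rule Min_le)
      ultimately show "real_of_int (Min ((\<lambda>\<alpha>. \<alpha> i) ` VV E r)) \<le> p $ i" using p by simp
      have "x $ i \<le> real (g1 i)" by (rule hull_ub[OF _ x]) (use g1 in auto)
      then have "\<lceil>r * x $ i\<rceil> \<le> \<lceil>r * real (g1 i)\<rceil>" using r by (intro ceiling_mono mult_left_mono)
      moreover have "\<lceil>r * real (g1 i)\<rceil> \<le> Max ((\<lambda>\<alpha>. \<alpha> i) ` VV E r)"
        using finV memV[OF g1(1)] by (rule Max_ge)
      ultimately show "p $ i \<le> real_of_int (Max ((\<lambda>\<alpha>. \<alpha> i) ` VV E r))" using p by simp
    qed
    then show "p \<in> SS E r" unfolding SS_def using p by auto
  qed
  have part2: "int_closure_pow E r \<subseteq> ideal_gen {a. rv a \<in> (\<lambda>x. r *\<^sub>R x) ` NP E \<inter> hype E r}"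
  proof
    fix b assume "b \<in> int_closure_pow E r"
    then obtain a x where ab: "a \<le> b" and x: "x \<in> convex hull (rv ` E)" and ax: "rv a = r *\<^sub>R x"
      unfolding int_closure_pow_def ideal_gen_def NP_def by auto
    have Ene: "E \<noteq> {}" using x by auto
    then obtain e0 where "e0 \<in> E" by auto
    then have Gne: "G \<noteq> {}" using below by auto
    define A where "A = (\<lambda>i. Max ((\<lambda>\<alpha>. \<alpha> i) ` VV E r))"
    define L where "L = (\<lambda>i. Min ((\<lambda>\<alpha>. \<alpha> i) ` VV E r))"
    define C where "C = (\<lambda>i. Max ((\<lambda>g. g i) ` G))"
    have CG: "g i \<le> C i" if "g \<in> G" for g i unfolding C_def using finG that by auto
    have axi: "real (a i) = r * x $ i" for i
    proof -
      have "rv a $ i = (r *\<^sub>R x) $ i" using ax by simp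
      then show ?thesis by simp
    qed
    have LA: "L i \<le> A i" for i
    proof -
      obtain g where g: "g \<in> G" using Gne by auto
      show ?thesis unfolding L_def A_def
        using order.trans[OF Min_le[OF finV memV[OF g]] Max_ge[OF finV memV[OF g]]] .
    qed
    have A0: "0 \<le> A i" for i
    proof -
      obtain g where g: "g \<in> G" using Gne by auto
      have "0 \<le> \<lceil>r * real (g i)\<rceil>" using r by simp (smt (verit) of_nat_0_le_iff zero_le_mult_iff)
      also have "\<dots> \<le> A i" unfolding A_def using finV memV[OF g] by (rule Max_ge)
      finally show ?thesis .
    qed
    have rA: "r * real (C i) \<le> A i" for i
    proof -
      obtain g1 where g1: "g1 \<in> G" "\<forall>g\<in>G. g i \<le> g1 i" using ex_max_coord[OF finG Gne] by blast
      have "C i = g1 i" unfolding C_def using g1 finG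
        by (intro Max_eqI) auto
      have "r * real (C i) \<le> \<lceil>r * real (g1 i)\<rceil>" using \<open>C i = g1 i\<close> by simp
      moreover have "\<lceil>r * real (g1 i)\<rceil> \<le> A i" unfolding A_def using finV memV[OF g1(1)] by (rule Max_ge)
      then have "real_of_int \<lceil>r * real (g1 i)\<rceil> \<le> real_of_int (A i)" by simp
      ultimately show ?thesis by linarith
    qed
    have La: "L i \<le> int (a i)" for i
    proof -
      obtain g0 where g0: "g0 \<in> G" "\<forall>g\<in>G. g0 i \<le> g i" using ex_min_coord[OF finG Gne] by blast
      have "real (g0 i) \<le> x $ i"
      proof (rule hull_lb[OF _ x])
        fix e assume "e \<in> E"
        then obtain g where "g \<in> G" "g \<le> e" using below by blast
        then show "real (g0 i) \<le> real (e i)" using g0 by (auto simp: le_fun_def intro: order.trans)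
      qed
      then have "r * real (g0 i) \<le> real (a i)" using axi r by (simp add: mult_left_mono)
      then have "\<lceil>r * real (g0 i)\<rceil> \<le> int (a i)" by (simp add: ceiling_le_iff)
      moreover have "L i \<le> \<lceil>r * real (g0 i)\<rceil>" unfolding L_def using finV memV[OF g0(1)] by (rule Min_le)
      ultimately show ?thesis by simp
    qed
    define a' where "a' = (\<lambda>i. min (a i) (nat (A i)))"
    have a'r: "real (a' i) = min (real (a i)) (real_of_int (A i))" for i
    proof -
      have e: "real (nat (A i)) = real_of_int (A i)" using A0[of i] by simp
      show ?thesis unfolding a'_def
        by (cases "a i \<le> nat (A i)") (simp_all add: min_def e[symmetric])
    qed
    have a'le: "a' \<le> b" using ab unfolding a'_def le_fun_def by (meson min.coboundedI1)
    have hy: "rv a' \<in> hype E r"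
      unfolding hype_def
    proof (intro CollectI allI conjI)
      fix i
      show "real_of_int (Min ((\<lambda>\<alpha>. \<alpha> i) ` VV E r)) \<le> rv a' $ i"
        using La[of i] LA[of i] a'r[of i] unfolding L_def by simp
      show "rv a' $ i \<le> real_of_int (Max ((\<lambda>\<alpha>. \<alpha> i) ` VV E r))"
        using a'r[of i] unfolding A_def by simp
    qed
    have inNP: "rv a' \<in> (\<lambda>x. r *\<^sub>R x) ` NP E"
    proof (cases "r = 0")
      case True
      then have "a' = a" using axi unfolding a'_def by (auto simp: fun_eq_iff)
      then show ?thesis using ax x unfolding NP_def by auto
    next
      case False
      then have rpos: "r > 0" using r by simp
      define E' where "E' = {e\<in>E. \<forall>i. e i \<le> C i}"
      have "\<exists>e'\<in>E'. e' \<le> e" if eE: "e \<in> E" for e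
      proof -
        obtain g where g: "g \<in> G" "g \<le> e" using below eE by blast
        define e' where "e' = (\<lambda>i. min (e i) (C i))"
        have "g \<le> e'" using g CG unfolding e'_def le_fun_def by auto
        then have "e' \<in> E" using mi g GE unfolding monomial_ideal_def by blast
        then have "e' \<in> E'" unfolding E'_def e'_def by auto
        moreover have "e' \<le> e" unfolding e'_def le_fun_def by auto
        ultimately show ?thesis by blast
      qed
      then obtain x' where x': "x' \<in> convex hull (rv ` E')" "\<forall>i. x' $ i \<le> x $ i"
        using down_trunc[OF _ x] by blast
      have x'C: "x' $ i \<le> real (C i)" for i by (rule hull_ub[OF _ x'(1)]) (auto simp: E'_def)
      have x'E: "x' \<in> convex hull (rv ` E)"
        using x'(1) by (rule rev_subsetD[OF _ hull_mono]) (auto simp: E'_def)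
      define z where "z = (1 / r) *\<^sub>R rv a'"
      have "x' + (z - x') \<in> convex hull (rv ` E)"
      proof (rule up_closed[OF mi x'E])
        fix i
        have zi: "z $ i = min (real (a i)) (real_of_int (A i)) / r" unfolding z_def using a'r by simp
        have "x' $ i \<le> real (a i) / r" using x'(2) axi rpos by (simp add: field_simps)
        moreover have "x' $ i \<le> real_of_int (A i) / r"
        proof -
          have "r * x' $ i \<le> r * real (C i)" using x'C[of i] r by (rule mult_left_mono)
          then have "r * x' $ i \<le> real_of_int (A i)" using rA[of i] by linarith
          then show ?thesis using rpos by (simp add: field_simps)
        qed
        ultimately have "x' $ i \<le> z $ i" unfolding zi using rpos
          by (simp add: min_def divide_right_mono)
        then show "0 \<le> (z - x') $ i" by simp
      qed
      then have "z \<in> NP E" unfolding NP_def by simp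
      moreover have "rv a' = r *\<^sub>R z" unfolding z_def using rpos by simp
      ultimately show ?thesis by blast
    qed
    show "b \<in> ideal_gen {a. rv a \<in> (\<lambda>x. r *\<^sub>R x) ` NP E \<inter> hype E r}"
      unfolding ideal_gen_def using a'le hy inNP by blast
  qed
  have part3: "ideal_gen {a. rv a \<in> (\<lambda>x. r *\<^sub>R x) ` NP E \<inter> hype E r} \<subseteq> int_closure_pow E r"
    unfolding int_closure_pow_def ideal_gen_def by auto
  show ?thesis using part1 part2 part3 by blast
qed


end
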